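(* Let $\Phi$ be an irreducible root system of rank $n$. There exists a subset $H_\Phi\subseteq[n]$ such that $$\mathcal H_\Phi=\{w(\breve\omega_k)^\perp\mid w\in W,\ k\in H_\Phi\}.$$ Furthermore, $H_\Phi$ is contained in the set of $h\in[n]$ such that the standard parabolic subsystem of $\Phi$ generated by $\Pi\setminus\{\alpha_h\}$ is irreducible.
   Context: $\Phi$ is a finite irreducible crystallographic root system in $E=\operatorname{span}_{\mathbb R}\Phi$ with inner product $(-,-)$, basis $\Pi=\{\alpha_1,\dots,\alpha_n\}$, Weyl group $W$. The fundamental coweights $\breve\omega_1,\dots,\breve\omega_n$ are the vectors of $E$ with $(\alpha_j,\breve\omega_i)=\delta_{ij}$; $W$ acts on them as vectors of $E$. $\mathcal P_\Phi=\operatorname{conv}(\Phi)$ and $\mathcal H_\Phi$ is the set of linear hyperplanes $\operatorname{span}_{\mathbb R}F$, $F$ a face of $\mathcal P_\Phi$ of dimension $n-2$. The standard parabolic subsystem generated by $\Gamma\subseteq\Pi$ is $\Phi\cap\operatorname{span}\Gamma$. *)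

theory Defs
  imports "HOL-Analysis.Analysis"
begin

definition refl :: "'a::euclidean_space \<Rightarrow> 'a \<Rightarrow> 'a" where
  "refl a x = x - (2 * (x \<bullet> a) / (a \<bullet> a)) *\<^sub>R a"

definition root_system :: "'a::euclidean_space set \<Rightarrow> bool" where
  "root_system \<Phi> \<longleftrightarrow> finite \<Phi> \<and> 0 \<notin> \<Phi> \<and> span \<Phi> = UNIV
     \<and> (\<forall>a\<in>\<Phi>. \<forall>b\<in>\<Phi>. refl a b \<in> \<Phi>)
     \<and> (\<forall>a\<in>\<Phi>. \<forall>b\<in>\<Phi>. 2 * (b \<bullet> a) / (a \<bullet> a) \<in> \<int>)
     \<and> (\<forall>a\<in>\<Phi>. \<forall>c. c *\<^sub>R a \<in> \<Phi> \<longrightarrow> c = 1 \<or> c = -1)"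

text \<open>Irreducible: no partition into two nonempty mutually orthogonal subsets
  (the empty system is irreducible vacuously).\<close>
definition irreducible_rs :: "'a::euclidean_space set \<Rightarrow> bool" where
  "irreducible_rs \<Phi> \<longleftrightarrow> (\<forall>A B. A \<union> B = \<Phi> \<and> A \<inter> B = {} \<and>
       (\<forall>a\<in>A. \<forall>b\<in>B. a \<bullet> b = 0) \<longrightarrow> A = {} \<or> B = {})"

definition is_base :: "'a::euclidean_space set \<Rightarrow> (nat \<Rightarrow> 'a) \<Rightarrow> nat \<Rightarrow> bool" where
  "is_base \<Phi> \<alpha> n \<longleftrightarrow> \<alpha> ` {1..n} \<subseteq> \<Phi> \<and> inj_on \<alpha> {1..n}
     \<and> independent (\<alpha> ` {1..n})
     \<and> (\<forall>b\<in>\<Phi>. \<exists>c :: nat \<Rightarrow> int. b = (\<Sum>i=1..n. of_int (c i) *\<^sub>R \<alpha> i)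
            \<and> ((\<forall>i\<in>{1..n}. c i \<ge> 0) \<or> (\<forall>i\<in>{1..n}. c i \<le> 0)))"

inductive_set weyl :: "'a::euclidean_space set \<Rightarrow> ('a \<Rightarrow> 'a) set" for \<Phi> where
  weyl_id: "id \<in> weyl \<Phi>"
| weyl_step: "a \<in> \<Phi> \<Longrightarrow> w \<in> weyl \<Phi> \<Longrightarrow> refl a \<circ> w \<in> weyl \<Phi>"

definition coweight :: "(nat \<Rightarrow> 'a::euclidean_space) \<Rightarrow> nat \<Rightarrow> nat \<Rightarrow> 'a" where
  "coweight \<alpha> n k = (THE v. \<forall>j\<in>{1..n}. \<alpha> j \<bullet> v = (if j = k then 1 else 0))"

definition face_hyperplanes :: "'a::euclidean_space set \<Rightarrow> 'a set set" where
  "face_hyperplanes \<Phi> = {span F | F. F face_of convex hull \<Phi> \<and> aff_dim F = int DIM('a) - 2}"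

definition orth :: "'a::euclidean_space \<Rightarrow> 'a set" where
  "orth v = {x. x \<bullet> v = 0}"

end

theory Submission
  imports Defs
begin


lemma refl_linear: "linear (refl a)"
  unfolding refl_def
  by (intro linearI) (auto simp: inner_add_left algebra_simps add_divide_distrib)

lemma refl_inner: "refl a x \<bullet> refl a y = x \<bullet> y"
proof (cases "a = 0")
  case True then show ?thesis by (simp add: refl_def)
next
  case False
  then have "a \<bullet> a \<noteq> 0" by simp
  then show ?thesis unfolding refl_def
    by (simp add: inner_diff_left inner_diff_right algebra_simps) (simp add: field_simps inner_commute)
qed

lemma refl_refl: "refl a (refl a x) = x"
proof (cases "a = 0")
  case True then show ?thesis by (simp add: refl_def)
next
  case False
  then have aa: "a \<bullet> a \<noteq> 0" by simp
  have "refl a x \<bullet> a = - (x \<bullet> a)" unfolding refl_def using aa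
    by (simp add: inner_diff_left)
  then show ?thesis unfolding refl_def[of a "refl a x"] by (simp add: refl_def)
qed

lemma weyl_linear: "w \<in> weyl \<Phi> \<Longrightarrow> linear w"
proof (induction rule: weyl.induct)
  case weyl_id then show ?case using linear_id by (simp add: id_def)
next
  case (weyl_step a w) then show ?case using linear_compose[OF weyl_step(3) refl_linear] by (simp add: o_def)
qed

lemma weyl_inner: "w \<in> weyl \<Phi> \<Longrightarrow> w x \<bullet> w y = x \<bullet> y"
  by (induction arbitrary: x y rule: weyl.induct) (auto simp: refl_inner)

lemma weyl_inj: assumes "w \<in> weyl \<Phi>" shows "inj w"
proof (rule injI)
  fix x y assume "w x = w y"
  then have "w (x - y) = 0" using weyl_linear[OF assms] by (simp add: linear_diff)
  then have "(x - y) \<bullet> (x - y) = 0" using weyl_inner[OF assms, of "x-y" "x-y"] by simp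
  then show "x = y" by simp
qed

lemma weyl_surj: "w \<in> weyl \<Phi> \<Longrightarrow> surj w"
  using linear_inj_imp_surj weyl_linear weyl_inj by blast

lemma weyl_Phi: assumes "root_system \<Phi>" "w \<in> weyl \<Phi>" "x \<in> \<Phi>" shows "w x \<in> \<Phi>"
  using assms(2,3) by (induction arbitrary: x rule: weyl.induct) (use assms(1) in \<open>auto simp: root_system_def\<close>)

lemma weyl_image_Phi: assumes "root_system \<Phi>" "w \<in> weyl \<Phi>" shows "w ` \<Phi> = \<Phi>"
  apply (rule endo_inj_surj)
  using assms weyl_Phi[OF assms] weyl_inj[OF assms(2)] inj_on_subset by (auto simp: root_system_def intro: inj_on_subset)

lemma weyl_comp: "w1 \<in> weyl \<Phi> \<Longrightarrow> w2 \<in> weyl \<Phi> \<Longrightarrow> w1 \<circ> w2 \<in> weyl \<Phi>"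
  by (induction rule: weyl.induct) (auto simp: o_assoc[symmetric] intro: weyl.weyl_step)

lemma weyl_refl: "a \<in> \<Phi> \<Longrightarrow> refl a \<in> weyl \<Phi>"
  using weyl.weyl_step[OF _ weyl.weyl_id] by fastforce

lemma weyl_inv: "w \<in> weyl \<Phi> \<Longrightarrow> \<exists>w'\<in>weyl \<Phi>. \<forall>x. w' (w x) = x"
proof (induction rule: weyl.induct)
  case weyl_id then show ?case using weyl.weyl_id[of \<Phi>] by (intro bexI[of _ id]) auto
next
  case (weyl_step a w)
  then obtain w' where "w' \<in> weyl \<Phi>" "\<forall>x. w' (w x) = x" by blast
  then show ?case using weyl_comp[OF \<open>w' \<in> weyl \<Phi>\<close> weyl_refl[OF weyl_step(1)]]
    by (intro bexI[of _ "w' \<circ> refl a"]) (auto simp: refl_refl)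
qed

lemma weyl_orth: assumes "w \<in> weyl \<Phi>" shows "w ` orth x = orth (w x)"
proof
  show "w ` orth x \<subseteq> orth (w x)" using weyl_inner[OF assms] by (auto simp: orth_def)
  show "orth (w x) \<subseteq> w ` orth x"
  proof
    fix y assume y: "y \<in> orth (w x)"
    obtain z where z: "y = w z" using weyl_surj[OF assms] by (metis surjD)
    then have "z \<bullet> x = 0" using y weyl_inner[OF assms] by (auto simp: orth_def)
    then show "y \<in> w ` orth x" using z by (auto simp: orth_def)
  qed
qed

lemma weyl_FH: assumes rs: "root_system \<Phi>" and w: "w \<in> weyl \<Phi>" and S: "S \<in> face_hyperplanes \<Phi>"
  shows "w ` S \<in> face_hyperplanes \<Phi>"
proof -
  obtain F where F: "F face_of convex hull \<Phi>" "aff_dim F = int DIM('a) - 2" "S = span F"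
    using S by (auto simp: face_hyperplanes_def)
  have lin: "linear w" and inj: "inj w" using w weyl_linear weyl_inj by auto
  have "w ` (convex hull \<Phi>) = convex hull \<Phi>"
    using convex_hull_linear_image[OF lin] weyl_image_Phi[OF rs w] by simp
  then have "w ` F face_of convex hull \<Phi>" using face_of_linear_image[OF lin inj] F(1) by metis
  moreover have "aff_dim (w ` F) = int DIM('a) - 2" using aff_dim_injective_linear_image[OF lin inj] F(2) by simp
  moreover have "w ` S = span (w ` F)" using span_linear_image[OF lin] F(3) by simp
  ultimately show ?thesis unfolding face_hyperplanes_def by blast
qed


lemma rs_int: "root_system \<Phi> \<Longrightarrow> a \<in> \<Phi> \<Longrightarrow> b \<in> \<Phi> \<Longrightarrow> 2 * (b \<bullet> a) / (a \<bullet> a) \<in> \<int>"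
  by (simp add: root_system_def)

lemma rs_refl: "root_system \<Phi> \<Longrightarrow> a \<in> \<Phi> \<Longrightarrow> b \<in> \<Phi> \<Longrightarrow> refl a b \<in> \<Phi>"
  by (simp add: root_system_def)

lemma rs_nz: "root_system \<Phi> \<Longrightarrow> a \<in> \<Phi> \<Longrightarrow> a \<noteq> 0"
  by (auto simp: root_system_def)

lemma rs_neg: assumes "root_system \<Phi>" "a \<in> \<Phi>" shows "- a \<in> \<Phi>"
proof -
  have "a \<bullet> a \<noteq> 0" using rs_nz[OF assms] by simp
  then have "refl a a = a - 2 *\<^sub>R a" by (simp add: refl_def)
  also have "\<dots> = - a" by (simp add: scaleR_2)
  finally have "refl a a = - a" .
  then show ?thesis using rs_refl[OF assms assms(2)] by simp
qed

lemma rs_add: assumes rs: "root_system \<Phi>" and a: "a \<in> \<Phi>" and r: "r \<in> \<Phi>"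
  and neg: "a \<bullet> r < 0" and ne: "r \<noteq> - a"
  shows "a + r \<in> \<Phi>"
proof -
  have aa: "a \<bullet> a > 0" and rr: "r \<bullet> r > 0" using rs_nz[OF rs a] rs_nz[OF rs r] by auto
  obtain k1 where k1: "2 * (a \<bullet> r) / (r \<bullet> r) = of_int k1" using rs_int[OF rs r a] by (auto elim: Ints_cases)
  obtain k2 where k2: "2 * (r \<bullet> a) / (a \<bullet> a) = of_int k2" using rs_int[OF rs a r] by (auto elim: Ints_cases)
  have "k1 < 0" proof -
    have "2 * (a \<bullet> r) / (r \<bullet> r) < 0" using neg rr by (simp add: divide_neg_pos)
    then show ?thesis using k1 by simp
  qed
  have "k2 < 0" proof -
    have "2 * (r \<bullet> a) / (a \<bullet> a) < 0" using neg aa by (simp add: divide_neg_pos inner_commute)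
    then show ?thesis using k2 by simp
  qed
  consider "k1 = -1" | "k2 = -1" | "k1 \<le> -2" "k2 \<le> -2" using \<open>k1 < 0\<close> \<open>k2 < 0\<close> by linarith
  then show ?thesis
  proof cases
    case 1
    have "refl r a = a + r" using k1 1 by (simp add: refl_def)
    then show ?thesis using rs_refl[OF rs r a] by simp
  next
    case 2
    have "refl a r = a + r" using k2 2 by (simp add: refl_def)
    then show ?thesis using rs_refl[OF rs a r] by simp
  next
    case 3
    have "(-k1) * (-k2) \<ge> 2 * 2" using 3 by (intro mult_mono) auto
    then have "real_of_int k1 * real_of_int k2 \<ge> 4" by (simp flip: of_int_mult)
    then have "(2 * (a \<bullet> r) / (r \<bullet> r)) * (2 * (r \<bullet> a) / (a \<bullet> a)) \<ge> 4" using k1 k2 by simp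
    then have "4 * ((a \<bullet> r) * (a \<bullet> r)) / ((r \<bullet> r) * (a \<bullet> a)) \<ge> 4" by (simp add: inner_commute)
    then have ineq: "(a \<bullet> r) * (a \<bullet> r) \<ge> (r \<bullet> r) * (a \<bullet> a)" using aa rr by (simp add: field_simps)
    define c where "c = (a \<bullet> r) / (r \<bullet> r)"
    have "(a - c *\<^sub>R r) \<bullet> (a - c *\<^sub>R r) = a \<bullet> a - (a \<bullet> r) * (a \<bullet> r) / (r \<bullet> r)"
      using rr unfolding c_def by (simp add: inner_diff_left inner_diff_right inner_commute field_simps power2_eq_square)
    also have "\<dots> \<le> 0" using ineq rr by (simp add: field_simps)
    finally have "a - c *\<^sub>R r = 0" by (metis inner_gt_zero_iff not_le)
    then have ac: "a = c *\<^sub>R r" by simp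
    have "c < 0" unfolding c_def using neg rr by (simp add: divide_neg_pos)
    moreover have "c = 1 \<or> c = -1" using rs a ac r by (auto simp: root_system_def)
    ultimately have "a = - r" using ac by auto
    then show ?thesis using ne by simp
  qed
qed

lemma irred_common:
  assumes irr: "irreducible_rs \<Phi>" and rs: "root_system \<Phi>" and a: "a \<in> \<Phi>" and b: "b \<in> \<Phi>"
  shows "\<exists>r\<in>\<Phi>. r \<bullet> a \<noteq> 0 \<and> r \<bullet> b \<noteq> 0"
proof -
  define C where "C = {x\<in>\<Phi>. \<exists>r\<in>\<Phi>. r \<bullet> a \<noteq> 0 \<and> r \<bullet> x \<noteq> 0}"
  have closed: "y \<in> C" if x: "x \<in> C" and y: "y \<in> \<Phi>" and xy: "x \<bullet> y \<noteq> 0" for x y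
  proof -
    obtain r where r: "r \<in> \<Phi>" "r \<bullet> a \<noteq> 0" "r \<bullet> x \<noteq> 0" and xP: "x \<in> \<Phi>" using x by (auto simp: C_def)
    show ?thesis
    proof (cases "r \<bullet> y \<noteq> 0 \<or> a \<bullet> y \<noteq> 0 \<or> x \<bullet> a \<noteq> 0")
      case True
      then show ?thesis
      proof (elim disjE)
        assume "r \<bullet> y \<noteq> 0" then show ?thesis using r y by (auto simp: C_def)
      next
        assume "a \<bullet> y \<noteq> 0" then show ?thesis using a y rs_nz[OF rs a] by (auto simp: C_def intro!: bexI[of _ a])
      next
        assume "x \<bullet> a \<noteq> 0" then show ?thesis using xP y xy by (auto simp: C_def inner_commute intro!: bexI[of _ x])
      qed
    next
      case False
      then have F: "r \<bullet> y = 0" "a \<bullet> y = 0" "x \<bullet> a = 0" by auto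
      define k where "k = 2 * (x \<bullet> r) / (r \<bullet> r)"
      have rr: "r \<bullet> r \<noteq> 0" using rs_nz[OF rs r(1)] by simp
      have k0: "k \<noteq> 0" unfolding k_def using r(3) rr by (simp add: inner_commute)
      have t: "refl r x = x - k *\<^sub>R r" by (simp add: refl_def k_def)
      have "refl r x \<bullet> a \<noteq> 0" using t F k0 r(2) by (simp add: inner_diff_left)
      moreover have "refl r x \<bullet> y \<noteq> 0" using t F xy by (simp add: inner_diff_left)
      moreover have "refl r x \<in> \<Phi>" using rs_refl[OF rs r(1) xP] .
      ultimately show ?thesis using y by (auto simp: C_def)
    qed
  qed
  have aC: "a \<in> C" using a rs_nz[OF rs a] by (auto simp: C_def intro!: bexI[of _ a])
  have "C \<union> (\<Phi> - C) = \<Phi> \<and> C \<inter> (\<Phi> - C) = {} \<and> (\<forall>x\<in>C. \<forall>y\<in>\<Phi> - C. x \<bullet> y = 0)"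
    using closed by (auto simp: C_def)
  then have "C = {} \<or> \<Phi> - C = {}" using irr unfolding irreducible_rs_def by blast
  then have "b \<in> C" using aC b by auto
  then show ?thesis by (auto simp: C_def)
qed


lemma orth_eq: "orth v = {x. v \<bullet> x = 0}"
  by (auto simp: orth_def inner_commute)

lemma subspace_orth: "subspace (orth v)"
  unfolding orth_eq by (rule subspace_hyperplane)

lemma dim_orth: "v \<noteq> 0 \<Longrightarrow> dim (orth v) = DIM('a) - 1" for v :: "'a::euclidean_space"
  unfolding orth_eq by (rule dim_hyperplane)

lemma base_span: assumes rs: "root_system \<Phi>" and b: "is_base \<Phi> \<alpha> n" shows "span (\<alpha> ` {1..n}) = UNIV"
proof -
  have "\<Phi> \<subseteq> span (\<alpha>`{1..n})"
  proof
    fix x assume "x \<in> \<Phi>"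
    then obtain c :: "nat \<Rightarrow> int" where "x = (\<Sum>i=1..n. of_int (c i) *\<^sub>R \<alpha> i)" using b by (auto simp: is_base_def)
    then show "x \<in> span (\<alpha>`{1..n})"
      by (simp only:) (rule span_sum, rule span_scale, rule span_base, simp)
  qed
  then have "span \<Phi> \<subseteq> span (\<alpha>`{1..n})" by (metis span_minimal subspace_span)
  then show ?thesis using rs by (auto simp: root_system_def)
qed

lemma ortho_all_zero: assumes "span (\<alpha> ` {1..n}) = UNIV" "\<forall>j\<in>{1..n}. \<alpha> j \<bullet> x = 0" shows "x = 0"
proof -
  have "span (\<alpha>`{1..n}) \<subseteq> {y. x \<bullet> y = 0}"
    by (rule span_minimal) (use assms(2) subspace_hyperplane[of x] in \<open>auto simp: inner_commute\<close>)
  then have "x \<bullet> x = 0" using assms(1) by blast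
  then show ?thesis by simp
qed

lemma base_indep_J: assumes b: "is_base \<Phi> \<alpha> n" and J: "J \<subseteq> {1..n}"
  shows "independent (\<alpha> ` J)" "card (\<alpha> ` J) = card J" "dim (span (\<alpha> ` J)) = card J"
proof -
  show i: "independent (\<alpha> ` J)" using b J independent_mono[of "\<alpha>`{1..n}" "\<alpha> ` J"] by (auto simp: is_base_def)
  show c: "card (\<alpha> ` J) = card J" using b J by (auto simp: is_base_def intro!: card_image intro: inj_on_subset)
  show "dim (span (\<alpha> ` J)) = card J" using dim_span_eq_card_independent[OF i] c by simp
qed

lemma coweight_prop: fixes \<alpha> :: "nat \<Rightarrow> 'a::euclidean_space" assumes rs: "root_system \<Phi>" and b: "is_base \<Phi> \<alpha> n" and n: "n = DIM('a)"
  and k: "k \<in> {1..n}"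
  shows "\<forall>j\<in>{1..n}. \<alpha> j \<bullet> coweight \<alpha> n k = (if j = k then 1 else 0)"
proof -
  have sp: "span (\<alpha> ` {1..n}) = UNIV" using base_span[OF rs b] .
  let ?J = "{1..n} - {k}"
  have "dim (span (\<alpha>`?J)) = n - 1" using base_indep_J[OF b, of ?J] k by auto
  then have dlt: "dim (\<alpha>`?J) < DIM('a)" using k n by (simp add: dim_span)
  obtain z :: 'a where z: "z \<noteq> 0" "\<And>y. y \<in> span (\<alpha>`?J) \<Longrightarrow> orthogonal z y"
    using orthogonal_to_subspace_exists[OF dlt] by blast
  have zj: "\<alpha> j \<bullet> z = 0" if "j \<in> ?J" for j
    using z(2)[of "\<alpha> j"] that span_base[of "\<alpha> j" "\<alpha>`?J"] by (auto simp: orthogonal_def inner_commute)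
  have zk: "\<alpha> k \<bullet> z \<noteq> 0"
  proof
    assume "\<alpha> k \<bullet> z = 0"
    then have "\<forall>j\<in>{1..n}. \<alpha> j \<bullet> z = 0" using zj by (metis Diff_iff singletonD)
    then show False using ortho_all_zero[OF sp] z(1) by blast
  qed
  define v where "v = (1 / (\<alpha> k \<bullet> z)) *\<^sub>R z"
  have v: "\<forall>j\<in>{1..n}. \<alpha> j \<bullet> v = (if j = k then 1 else 0)"
    using zj zk by (auto simp: v_def)
  have uniq: "u = v" if u: "\<forall>j\<in>{1..n}. \<alpha> j \<bullet> u = (if j = k then 1 else 0)" for u
  proof -
    have "\<forall>j\<in>{1..n}. \<alpha> j \<bullet> (u - v) = 0" using u v by (simp add: inner_diff_right)
    then show ?thesis using ortho_all_zero[OF sp] by fastforce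
  qed
  have "\<exists>!v. \<forall>j\<in>{1..n}. \<alpha> j \<bullet> v = (if j = k then 1 else 0)" using v uniq by blast
  then show ?thesis unfolding coweight_def by (rule theI')
qed

lemma coweight_nz: fixes \<alpha> :: "nat \<Rightarrow> 'a::euclidean_space" assumes rs: "root_system \<Phi>" and b: "is_base \<Phi> \<alpha> n" and n: "n = DIM('a)"
  and k: "k \<in> {1..n}" shows "coweight \<alpha> n k \<noteq> (0::'a)"
  using coweight_prop[OF assms] k by force

lemma span_J_orth: fixes \<alpha> :: "nat \<Rightarrow> 'a::euclidean_space" assumes rs: "root_system \<Phi>" and b: "is_base \<Phi> \<alpha> n" and n: "n = DIM('a)"
  and h: "h \<in> {1..n}" shows "span (\<alpha> ` ({1..n} - {h})) = orth (coweight \<alpha> n h :: 'a)"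
proof (rule subspace_dim_equal)
  show "subspace (span (\<alpha> ` ({1..n} - {h})))" by simp
  show "subspace (orth (coweight \<alpha> n h))" by (rule subspace_orth)
  show "span (\<alpha> ` ({1..n} - {h})) \<subseteq> orth (coweight \<alpha> n h)"
    using coweight_prop[OF assms] by (intro span_minimal subspace_orth) (auto simp: orth_def)
  have "dim (span (\<alpha> ` ({1..n} - {h}))) = n - 1" using base_indep_J[OF b, of "{1..n} - {h}"] h by auto
  then show "dim (orth (coweight \<alpha> n h)) \<le> dim (span (\<alpha> ` ({1..n} - {h})))"
    using dim_orth[OF coweight_nz[OF assms]] n by simp
qed


lemma orth_from_dim: fixes S :: "'a::euclidean_space set"
  assumes "dim (span S) = DIM('a) - 1" and "DIM('a) \<ge> 1"
  shows "\<exists>v. v \<noteq> 0 \<and> span S = orth v"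
proof -
  have "dim S < DIM('a)" using assms by (simp add: dim_span)
  then obtain v :: 'a where v: "v \<noteq> 0" "\<And>y. y \<in> span S \<Longrightarrow> orthogonal v y"
    using orthogonal_to_subspace_exists by blast
  have "span S = orth v"
  proof (rule subspace_dim_equal)
    show "span S \<subseteq> orth v" using v(2) by (auto simp: orth_def orthogonal_def inner_commute)
    show "dim (orth v) \<le> dim (span S)" using dim_orth[OF v(1)] assms by simp
  qed (auto simp: subspace_orth)
  then show ?thesis using v by blast
qed

lemma rs_zero_aff: assumes rs: "root_system \<Phi>" shows "0 \<in> affine hull \<Phi>"
proof -
  obtain e :: 'a where e: "e \<in> Basis" using nonempty_Basis by blast
  have "\<Phi> \<noteq> {}"
  proof
    assume "\<Phi> = {}"
    then have "span \<Phi> = {0}" by simp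
    then show False using rs e by (auto simp: root_system_def)
  qed
  then obtain x where x: "x \<in> \<Phi>" by blast
  have "(1/2) *\<^sub>R x + (1/2) *\<^sub>R (- x) \<in> affine hull \<Phi>"
    by (rule mem_affine[OF affine_affine_hull]) (use x rs_neg[OF rs x] hull_inc in auto)
  then show ?thesis by simp
qed

lemma face_hyp: fixes \<Phi> :: "'a::euclidean_space set"
  assumes rs: "root_system \<Phi>" and F: "F face_of convex hull \<Phi>" and ad: "aff_dim F = int DIM('a) - 2"
  shows "\<exists>v. v \<noteq> 0 \<and> span F = orth v"
proof (cases "F = {}")
  case True
  then have "DIM('a) = 1" using ad by simp
  then show ?thesis using orth_from_dim[of F] True by simp
next
  case False
  have "polyhedron (convex hull \<Phi>)" using rs
    by (intro polytope_imp_polyhedron) (auto simp: polytope_def root_system_def)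
  then have "F exposed_face_of convex hull \<Phi>" using exposed_face_of_polyhedron F by blast
  then obtain a b where ab: "convex hull \<Phi> \<subseteq> {x. a \<bullet> x \<le> b}" "F = convex hull \<Phi> \<inter> {x. a \<bullet> x = b}"
    unfolding exposed_face_of_def by blast
  show ?thesis
  proof (cases "b = 0")
    case True
    have "\<Phi> \<subseteq> {x. a \<bullet> x = 0}"
    proof
      fix x assume x: "x \<in> \<Phi>"
      have "a \<bullet> x \<le> 0" "a \<bullet> (-x) \<le> 0" using ab(1) True x rs_neg[OF rs x] hull_inc[of _ \<Phi>] by force+
      then show "x \<in> {x. a \<bullet> x = 0}" by simp
    qed
    then have "convex hull \<Phi> \<subseteq> {x. a \<bullet> x = 0}" by (intro hull_minimal) (auto simp: convex_hyperplane)
    then have "F = convex hull \<Phi>" using ab(2) True by auto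
    then have "aff_dim F = aff_dim \<Phi>" by (simp add: aff_dim_convex_hull)
    also have "\<dots> = int (dim \<Phi>)" using aff_dim_zero[OF rs_zero_aff[OF rs]] .
    also have "\<dots> = int DIM('a)" using rs by (metis dim_UNIV dim_span root_system_def)
    finally show ?thesis using ad by simp
  next
    case False
    have aff: "affine hull F \<subseteq> {x. a \<bullet> x = b}" using ab(2) by (intro hull_minimal) (auto simp: affine_hyperplane)
    obtain x0 where x0: "x0 \<in> F" using \<open>F \<noteq> {}\<close> by blast
    define T where "T = (\<lambda>x. x - x0) ` F"
    have adT: "aff_dim F = int (dim T)" unfolding T_def by (rule aff_dim_eq_dim_subtract) (use x0 in \<open>simp add: hull_inc\<close>)
    have ahF: "affine hull F = (\<lambda>x. x0 + x) ` span ((\<lambda>x. - x0 + x) ` F)"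
      by (rule affine_hull_span_gen) (use x0 in \<open>simp add: hull_inc\<close>)
    have T': "(\<lambda>x. - x0 + x) ` F = T" unfolding T_def by auto
    have nx0: "x0 \<notin> span T"
    proof
      assume "x0 \<in> span T"
      then have "- x0 \<in> span T" by (rule span_neg)
      then have "x0 + (- x0) \<in> affine hull F" unfolding ahF T' by (rule imageI)
      then show False using aff False by auto
    qed
    have "span F = span (insert x0 T)"
    proof (subst span_eq, intro conjI)
      show "F \<subseteq> span (insert x0 T)"
      proof
        fix x assume x: "x \<in> F"
        have "x0 + (x - x0) \<in> span (insert x0 T)"
          by (rule span_add) (use x T_def in \<open>auto intro: span_base\<close>)
        then show "x \<in> span (insert x0 T)" by simp
      qed
      show "insert x0 T \<subseteq> span F"
        using x0 by (auto simp: T_def intro: span_base span_diff)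
    qed
    then have "dim (span F) = dim T + 1" using nx0 by (simp add: dim_span dim_insert)
    then have "dim (span F) = DIM('a) - 1" using ad adT by linarith
    then show ?thesis using orth_from_dim[of F] by (simp add: DIM_positive Suc_leI)
  qed
qed





lemma hyperplane_conj:
  fixes \<alpha> :: "nat \<Rightarrow> 'a::euclidean_space"
  assumes rs: "root_system \<Phi>" and b: "is_base \<Phi> \<alpha> n" and n: "n = DIM('a)"
    and v: "v \<noteq> 0" and sp: "orth v \<subseteq> span (\<Phi> \<inter> orth v)"
  shows "\<exists>w\<in>weyl \<Phi>. \<exists>k\<in>{1..n}. w ` orth v = orth (coweight \<alpha> n k)"
proof -
  have finP: "finite \<Phi>" using rs by (simp add: root_system_def)
  have "v \<in> span \<Phi>" using rs by (simp add: root_system_def)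
  then obtain c where vc: "v = (\<Sum>x\<in>\<Phi>. c x *\<^sub>R x)" using span_finite[OF finP] by auto
  define Orb where "Orb = (\<lambda>w. w v) ` weyl \<Phi>"
  have "Orb \<subseteq> (\<lambda>g. \<Sum>x\<in>\<Phi>. c x *\<^sub>R g x) ` (\<Phi> \<rightarrow>\<^sub>E \<Phi>)"
  proof
    fix y assume "y \<in> Orb"
    then obtain w where w: "w \<in> weyl \<Phi>" "y = w v" by (auto simp: Orb_def)
    have lin: "linear w" using weyl_linear[OF w(1)] .
    have "w v = (\<Sum>x\<in>\<Phi>. c x *\<^sub>R w x)" unfolding vc
      by (simp add: linear_sum[OF lin] linear_scale[OF lin])
    also have "\<dots> = (\<Sum>x\<in>\<Phi>. c x *\<^sub>R restrict w \<Phi> x)" by (rule sum.cong) auto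
    finally have "y = (\<Sum>x\<in>\<Phi>. c x *\<^sub>R restrict w \<Phi> x)" using w by simp
    moreover have "restrict w \<Phi> \<in> \<Phi> \<rightarrow>\<^sub>E \<Phi>" using weyl_Phi[OF rs w(1)] by auto
    ultimately show "y \<in> (\<lambda>g. \<Sum>x\<in>\<Phi>. c x *\<^sub>R g x) ` (\<Phi> \<rightarrow>\<^sub>E \<Phi>)" by blast
  qed
  moreover have "finite ((\<lambda>g. \<Sum>x\<in>\<Phi>. c x *\<^sub>R g x) ` (\<Phi> \<rightarrow>\<^sub>E \<Phi>))"
    by (rule finite_imageI) (rule finite_PiE[OF finP], rule finP)
  ultimately have finO: "finite Orb" by (rule finite_subset)
  define \<rho> where "\<rho> = (\<Sum>k\<in>{1..n}. coweight \<alpha> n k)"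
  have a\<rho>: "\<alpha> i \<bullet> \<rho> = 1" if i: "i \<in> {1..n}" for i
  proof -
    have "\<alpha> i \<bullet> \<rho> = (\<Sum>k\<in>{1..n}. \<alpha> i \<bullet> coweight \<alpha> n k)" by (simp add: \<rho>_def inner_sum_right)
    also have "\<dots> = (\<Sum>k\<in>{1..n}. if i = k then 1 else 0)"
      using coweight_prop[OF rs b n] i by (intro sum.cong) auto
    also have "\<dots> = 1" using i by simp
    finally show ?thesis .
  qed
  define M where "M = Max ((\<lambda>y. y \<bullet> \<rho>) ` Orb)"
  have neO: "Orb \<noteq> {}" using weyl.weyl_id by (auto simp: Orb_def)
  have "M \<in> (\<lambda>y. y \<bullet> \<rho>) ` Orb" unfolding M_def using finO neO by (intro Max_in) auto
  then obtain w0 where w0: "w0 \<in> weyl \<Phi>" "w0 v \<bullet> \<rho> = M" by (auto simp: Orb_def)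
  have maxM: "w v \<bullet> \<rho> \<le> M" if "w \<in> weyl \<Phi>" for w
    unfolding M_def using finO that by (intro Max_ge) (auto simp: Orb_def)
  define u where "u = w0 v"
  have dom: "\<alpha> i \<bullet> u \<ge> 0" if i: "i \<in> {1..n}" for i
  proof (rule ccontr)
    assume neg: "\<not> \<alpha> i \<bullet> u \<ge> 0"
    have ai: "\<alpha> i \<in> \<Phi>" using b i by (auto simp: is_base_def)
    have aa: "\<alpha> i \<bullet> \<alpha> i > 0" using rs_nz[OF rs ai] by simp
    have w1: "refl (\<alpha> i) \<circ> w0 \<in> weyl \<Phi>" using weyl.weyl_step[OF ai w0(1)] .
    have "(refl (\<alpha> i) \<circ> w0) v \<bullet> \<rho> = u \<bullet> \<rho> - (2 * (u \<bullet> \<alpha> i) / (\<alpha> i \<bullet> \<alpha> i)) * (\<alpha> i \<bullet> \<rho>)"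
      by (simp add: u_def refl_def inner_diff_left)
    also have "\<dots> = M - 2 * (u \<bullet> \<alpha> i) / (\<alpha> i \<bullet> \<alpha> i)" using a\<rho>[OF i] w0(2) u_def by simp
    also have "\<dots> > M" using neg aa by (simp add: inner_commute divide_neg_pos)
    finally show False using maxM[OF w1] by simp
  qed
  have u0: "u \<noteq> 0"
  proof
    assume "u = 0"
    then have "v \<bullet> v = 0" using weyl_inner[OF w0(1), of v v] by (simp add: u_def)
    then show False using v by simp
  qed
  have ou: "orth u = w0 ` orth v" using weyl_orth[OF w0(1)] by (simp add: u_def)
  have spu: "orth u \<subseteq> span (\<Phi> \<inter> orth u)"
  proof -
    have "orth u \<subseteq> w0 ` span (\<Phi> \<inter> orth v)" using ou sp by auto
    also have "\<dots> = span (w0 ` (\<Phi> \<inter> orth v))" using span_linear_image[OF weyl_linear[OF w0(1)]] by simp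
    also have "\<dots> \<subseteq> span (\<Phi> \<inter> orth u)"
      using weyl_Phi[OF rs w0(1)] ou by (intro span_mono) auto
    finally show ?thesis .
  qed
  define Z where "Z = {i\<in>{1..n}. \<alpha> i \<bullet> u = 0}"
  have roots: "\<beta> \<in> span (\<alpha> ` Z)" if \<beta>: "\<beta> \<in> \<Phi>" "\<beta> \<bullet> u = 0" for \<beta>
  proof -
    obtain c :: "nat \<Rightarrow> int" where c: "\<beta> = (\<Sum>i=1..n. of_int (c i) *\<^sub>R \<alpha> i)"
      and sg: "(\<forall>i\<in>{1..n}. c i \<ge> 0) \<or> (\<forall>i\<in>{1..n}. c i \<le> 0)"
      using b \<beta>(1) by (auto simp: is_base_def)
    have s0: "(\<Sum>i=1..n. of_int (c i) * (\<alpha> i \<bullet> u)) = 0"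
      using \<beta>(2) unfolding c by (simp add: inner_sum_left)
    have terms: "\<forall>i\<in>{1..n}. of_int (c i) * (\<alpha> i \<bullet> u) = 0"
      using sg
    proof
      assume pos: "\<forall>i\<in>{1..n}. c i \<ge> 0"
      have "\<forall>i\<in>{1..n}. of_int (c i) * (\<alpha> i \<bullet> u) \<ge> 0" using pos dom by auto
      then show ?thesis using s0 sum_nonneg_eq_0_iff[of "{1..n}" "\<lambda>i. of_int (c i) * (\<alpha> i \<bullet> u)"] by simp
    next
      assume ng: "\<forall>i\<in>{1..n}. c i \<le> 0"
      have "\<forall>i\<in>{1..n}. - (of_int (c i) * (\<alpha> i \<bullet> u)) \<ge> 0" using ng dom
        by (auto simp: mult_nonpos_nonneg)
      moreover have "(\<Sum>i=1..n. - (of_int (c i) * (\<alpha> i \<bullet> u))) = 0" using s0 by (simp add: sum_negf)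
      ultimately have "\<forall>i\<in>{1..n}. - (of_int (c i) * (\<alpha> i \<bullet> u)) = 0"
        using sum_nonneg_eq_0_iff[of "{1..n}" "\<lambda>i. - (of_int (c i) * (\<alpha> i \<bullet> u))"] by simp
      then show ?thesis by simp
    qed
    show ?thesis unfolding c
    proof (rule span_sum)
      fix i assume i: "i \<in> {1..n}"
      show "of_int (c i) *\<^sub>R \<alpha> i \<in> span (\<alpha> ` Z)"
      proof (cases "\<alpha> i \<bullet> u = 0")
        case True
        then have "i \<in> Z" using i by (simp add: Z_def)
        then show ?thesis by (intro span_scale span_base) auto
      next
        case False
        then have "c i = 0" using terms i by force
        then show ?thesis by (simp add: span_zero)
      qed
    qed
  qed
  have "\<Phi> \<inter> orth u \<subseteq> span (\<alpha> ` Z)" using roots by (auto simp: orth_def)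
  then have "span (\<Phi> \<inter> orth u) \<subseteq> span (\<alpha> ` Z)" by (rule span_minimal) simp
  then have ouZ: "orth u \<subseteq> span (\<alpha> ` Z)" using spu by (rule order_trans[rotated])
  have Zsub: "Z \<subseteq> {1..n}" by (auto simp: Z_def)
  have "DIM('a) - 1 \<le> card Z"
    using dim_subset[OF ouZ] dim_orth[OF u0] base_indep_J(3)[OF b Zsub] by simp
  have "Z \<noteq> {1..n}"
  proof
    assume "Z = {1..n}"
    then have "\<forall>j\<in>{1..n}. \<alpha> j \<bullet> u = 0" by (auto simp: Z_def)
    then show False using ortho_all_zero[OF base_span[OF rs b]] u0 by blast
  qed
  then obtain k where k: "k \<in> {1..n}" "k \<notin> Z" using Zsub by blast
  have ZJ: "Z \<subseteq> {1..n} - {k}" using Zsub k by auto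
  have "card ({1..n} - {k}) = n - 1" using k by simp
  moreover have "card Z \<le> card ({1..n} - {k})" by (rule card_mono[OF _ ZJ]) simp
  ultimately have "card Z = card ({1..n} - {k})" using \<open>DIM('a) - 1 \<le> card Z\<close> n by linarith
  then have "Z = {1..n} - {k}" by (intro card_subset_eq[OF _ ZJ]) simp
  then have "orth u \<subseteq> orth (coweight \<alpha> n k)" using ouZ span_J_orth[OF rs b n k(1)] by simp
  then have "orth u = orth (coweight \<alpha> n k)"
    by (rule subspace_dim_equal[OF subspace_orth subspace_orth])
       (simp add: dim_orth[OF u0] dim_orth[OF coweight_nz[OF rs b n k(1)]])
  then have "w0 ` orth v = orth (coweight \<alpha> n k)" using ou by simp
  then show ?thesis using w0(1) k(1) by blast
qed




lemma span_face_T: assumes rs: "root_system \<Phi>" and F: "F face_of convex hull \<Phi>"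
  obtains T where "T \<subseteq> \<Phi>" "T \<subseteq> F" "span T = span F"
proof -
  have "compact \<Phi>" using rs by (simp add: root_system_def finite_imp_compact)
  then obtain T where T: "T \<subseteq> \<Phi>" "F = convex hull T" using face_of_convex_hull_subset[OF _ F] by blast
  have "span (convex hull T) = span T"
  proof (subst span_eq, intro conjI)
    show "convex hull T \<subseteq> span T" by (rule hull_minimal[OF span_superset]) (simp add: subspace_imp_convex)
    show "T \<subseteq> span (convex hull T)" using hull_subset[of T convex] span_superset[of "convex hull T"] by (rule order_trans)
  qed
  moreover have "T \<subseteq> F" unfolding T(2) by (rule hull_subset)
  ultimately show ?thesis using that[OF T(1)] T(2) by simp
qed

theorem proposition3p2:
  fixes \<Phi> :: "'a::euclidean_space set" and \<alpha> :: "nat \<Rightarrow> 'a"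
  assumes "root_system \<Phi>" and "irreducible_rs \<Phi>" and "is_base \<Phi> \<alpha> DIM('a)"
  shows "\<exists>H \<subseteq> {1..DIM('a)}.
     face_hyperplanes \<Phi> = {orth (w (coweight \<alpha> DIM('a) k)) | w k. w \<in> weyl \<Phi> \<and> k \<in> H}
     \<and> H \<subseteq> {h \<in> {1..DIM('a)}. irreducible_rs (\<Phi> \<inter> span (\<alpha> ` ({1..DIM('a)} - {h})))}"
proof -
  note rs = assms(1) and irr = assms(2) and b = assms(3)
  define n where "n = DIM('a)"
  have b': "is_base \<Phi> \<alpha> n" using b by (simp add: n_def)
  have nn: "n = DIM('a)" by (simp add: n_def)
  define H where "H = {k \<in> {1..n}. orth (coweight \<alpha> n k) \<in> face_hyperplanes \<Phi>}"
  have part1: "face_hyperplanes \<Phi> = {orth (w (coweight \<alpha> n k)) | w k. w \<in> weyl \<Phi> \<and> k \<in> H}"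
  proof
    show "face_hyperplanes \<Phi> \<subseteq> {orth (w (coweight \<alpha> n k)) | w k. w \<in> weyl \<Phi> \<and> k \<in> H}"
    proof
      fix S assume S: "S \<in> face_hyperplanes \<Phi>"
      then obtain F where F: "F face_of convex hull \<Phi>" "aff_dim F = int DIM('a) - 2" "S = span F"
        by (auto simp: face_hyperplanes_def)
      obtain v where v: "v \<noteq> 0" "span F = orth v" using face_hyp[OF rs F(1,2)] by blast
      obtain T where T: "T \<subseteq> \<Phi>" "T \<subseteq> F" "span T = span F" using span_face_T[OF rs F(1)] by blast
      have "T \<subseteq> \<Phi> \<inter> orth v" using T v(2) span_superset[of F] by auto
      then have "span T \<subseteq> span (\<Phi> \<inter> orth v)" by (rule span_mono)
      then have "orth v \<subseteq> span (\<Phi> \<inter> orth v)" using T(3) v(2) by simp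
      then obtain w k where wk: "w \<in> weyl \<Phi>" "k \<in> {1..n}" "w ` orth v = orth (coweight \<alpha> n k)"
        using hyperplane_conj[OF rs b' nn v(1)] by blast
      have "orth (coweight \<alpha> n k) \<in> face_hyperplanes \<Phi>"
        using weyl_FH[OF rs wk(1) S] wk(3) F(3) v(2) by simp
      then have kH: "k \<in> H" using wk(2) by (simp add: H_def)
      obtain w' where w': "w' \<in> weyl \<Phi>" "\<forall>x. w' (w x) = x" using weyl_inv[OF wk(1)] by blast
      have "S = w' ` (w ` orth v)" using F(3) v(2) w'(2) by (simp add: image_image)
      also have "\<dots> = orth (w' (coweight \<alpha> n k))" using wk(3) weyl_orth[OF w'(1)] by simp
      finally show "S \<in> {orth (w (coweight \<alpha> n k)) | w k. w \<in> weyl \<Phi> \<and> k \<in> H}"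
        using w'(1) kH by blast
    qed
    show "{orth (w (coweight \<alpha> n k)) | w k. w \<in> weyl \<Phi> \<and> k \<in> H} \<subseteq> face_hyperplanes \<Phi>"
    proof
      fix S assume "S \<in> {orth (w (coweight \<alpha> n k)) | w k. w \<in> weyl \<Phi> \<and> k \<in> H}"
      then obtain w k where wk: "w \<in> weyl \<Phi>" "k \<in> H" "S = orth (w (coweight \<alpha> n k))" by blast
      have "S = w ` orth (coweight \<alpha> n k)" using wk(3) weyl_orth[OF wk(1)] by simp
      then show "S \<in> face_hyperplanes \<Phi>" using weyl_FH[OF rs wk(1)] wk(2) by (simp add: H_def)
    qed
  qed
  have part2: "H \<subseteq> {h \<in> {1..n}. irreducible_rs (\<Phi> \<inter> span (\<alpha> ` ({1..n} - {h})))}"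
  proof
    fix h assume hH: "h \<in> H"
    then have h: "h \<in> {1..n}" and hF: "orth (coweight \<alpha> n h) \<in> face_hyperplanes \<Phi>" by (auto simp: H_def)
    define L where "L = span (\<alpha> ` ({1..n} - {h}))"
    have L: "L = orth (coweight \<alpha> n h)" unfolding L_def by (rule span_J_orth[OF rs b' nn h])
    have subL: "subspace L" unfolding L_def by simp
    obtain F where F: "F face_of convex hull \<Phi>" "aff_dim F = int DIM('a) - 2" "L = span F"
      using hF L by (auto simp: face_hyperplanes_def)
    obtain T where T: "T \<subseteq> \<Phi>" "T \<subseteq> F" "span T = span F" using span_face_T[OF rs F(1)] by blast
    have FL: "F \<subseteq> L" using F(3) span_superset by blast
    have "irreducible_rs (\<Phi> \<inter> L)" unfolding irreducible_rs_def
    proof (intro allI impI)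
      fix A B assume AB: "A \<union> B = \<Phi> \<inter> L \<and> A \<inter> B = {} \<and> (\<forall>a\<in>A. \<forall>b\<in>B. a \<bullet> b = 0)"
      show "A = {} \<or> B = {}"
      proof (rule ccontr)
        assume ne: "\<not> (A = {} \<or> B = {})"
        have TAB: "T \<subseteq> A \<union> B" using AB T FL by auto
        have TA: "T \<inter> A \<noteq> {}"
        proof
          assume "T \<inter> A = {}"
          then have "T \<subseteq> B" using TAB by auto
          obtain a0 where a0: "a0 \<in> A" using ne by blast
          have "span B \<subseteq> {x. a0 \<bullet> x = 0}"
            by (rule span_minimal) (use AB a0 subspace_hyperplane[of a0] in auto)
          moreover have "a0 \<in> span B"
          proof -
            have "a0 \<in> L" using a0 AB by blast
            then have "a0 \<in> span T" using T(3) F(3) by simp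
            then show ?thesis using span_mono[OF \<open>T \<subseteq> B\<close>] by blast
          qed
          ultimately have "a0 = 0" by auto
          then show False using a0 AB rs_nz[OF rs, of a0] by auto
        qed
        have TB: "T \<inter> B \<noteq> {}"
        proof
          assume "T \<inter> B = {}"
          then have "T \<subseteq> A" using TAB by auto
          obtain b0 where b0: "b0 \<in> B" using ne by blast
          have "span A \<subseteq> {x. b0 \<bullet> x = 0}"
            by (rule span_minimal) (use AB b0 subspace_hyperplane[of b0] in \<open>auto simp: inner_commute\<close>)
          moreover have "b0 \<in> span A"
          proof -
            have "b0 \<in> L" using b0 AB by blast
            then have "b0 \<in> span T" using T(3) F(3) by simp
            then show ?thesis using span_mono[OF \<open>T \<subseteq> A\<close>] by blast
          qed
          ultimately have "b0 = 0" by auto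
          then show False using b0 AB rs_nz[OF rs, of b0] by auto
        qed
        obtain a where a: "a \<in> T" "a \<in> A" using TA by blast
        obtain bb where bb: "bb \<in> T" "bb \<in> B" using TB by blast
        have aP: "a \<in> \<Phi>" "a \<in> L" and bP: "bb \<in> \<Phi>" "bb \<in> L" using a bb AB by auto
        have ab0: "a \<bullet> bb = 0" using a bb AB by auto
        obtain r where r: "r \<in> \<Phi>" "r \<bullet> a \<noteq> 0" "r \<bullet> bb \<noteq> 0" using irred_common[OF irr rs aP(1) bP(1)] by blast
        obtain r1 where r1: "r1 \<in> \<Phi>" "r1 \<bullet> a < 0" "r1 \<bullet> bb \<noteq> 0"
        proof (cases "r \<bullet> a < 0")
          case True then show ?thesis using that r by blast
        next
          case False then show ?thesis using that[of "- r"] r rs_neg[OF rs r(1)] by auto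
        qed
        obtain r2 where r2: "r2 \<in> \<Phi>" "r2 \<bullet> a < 0" "r2 \<bullet> bb < 0"
        proof (cases "r1 \<bullet> bb < 0")
          case True then show ?thesis using that r1 by blast
        next
          case False
          have bb0: "bb \<bullet> bb \<noteq> 0" using rs_nz[OF rs bP(1)] by simp
          have ba0: "bb \<bullet> a = 0" using ab0 by (simp add: inner_commute)
          have "refl bb r1 \<bullet> a = r1 \<bullet> a" using ba0 by (simp add: refl_def inner_diff_left)
          moreover have "refl bb r1 \<bullet> bb = - (r1 \<bullet> bb)" using bb0 by (simp add: refl_def inner_diff_left)
          ultimately show ?thesis using that[of "refl bb r1"] r1 False rs_refl[OF rs bP(1) r1(1)] by auto
        qed
        have r2L: "r2 \<notin> L"
        proof
          assume "r2 \<in> L"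
          then have "r2 \<in> A \<union> B" using AB r2(1) by auto
          then show False
          proof
            assume "r2 \<in> A" then have "r2 \<bullet> bb = 0" using AB bb(2) by blast
            then show False using r2(3) by (simp add: inner_commute)
          next
            assume "r2 \<in> B" then have "a \<bullet> r2 = 0" using AB a(2) by blast
            then show False using r2(2) by (simp add: inner_commute)
          qed
        qed
        have "r2 \<noteq> - a" using r2L aP(2) subL by (auto simp: subspace_neg)
        then have p: "a + r2 \<in> \<Phi>" using rs_add[OF rs aP(1) r2(1)] r2(2) by (simp add: inner_commute)
        have "bb \<bullet> (a + r2) < 0" using ab0 r2(3) by (simp add: inner_add_right inner_commute)
        moreover have "a + r2 \<noteq> - bb"
        proof
          assume "a + r2 = - bb"
          then have "r2 = - bb - a" by (simp add: algebra_simps)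
          then show False using r2L aP(2) bP(2) subL by (simp add: subspace_diff subspace_neg)
        qed
        ultimately have q: "bb + (a + r2) \<in> \<Phi>" using rs_add[OF rs bP(1) p] by auto
        have d: "- r2 \<in> \<Phi>" using rs_neg[OF rs r2(1)] .
        have "(1/2) *\<^sub>R a + (1/2) *\<^sub>R bb \<in> F"
          by (rule convexD[OF face_of_imp_convex[OF F(1)]]) (use a(1) bb(1) T(2) in auto)
        then have mF: "midpoint a bb \<in> F" by (simp add: midpoint_def scaleR_right_distrib)
        have meq: "midpoint (bb + (a + r2)) (- r2) = midpoint a bb" by (simp add: midpoint_def algebra_simps)
        have "- r2 \<in> F"
        proof (cases "bb + (a + r2) = - r2")
          case True
          then show ?thesis using mF meq by simp
        next
          case False
          then have "midpoint (bb + (a + r2)) (- r2) \<in> open_segment (bb + (a + r2)) (- r2)"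
            by (simp add: midpoint_in_open_segment)
          then have "midpoint a bb \<in> open_segment (bb + (a + r2)) (- r2)" using meq by simp
          then show ?thesis using face_ofD[OF F(1) _ hull_inc[OF q] hull_inc[OF d] mF] by blast
        qed
        then have "- r2 \<in> L" using FL by auto
        then have "- (- r2) \<in> L" using subL by (rule subspace_neg[rotated])
        then show False using r2L by simp
      qed
    qed
    then show "h \<in> {h \<in> {1..n}. irreducible_rs (\<Phi> \<inter> span (\<alpha> ` ({1..n} - {h})))}"
      using h by (simp add: L_def)
  qed
  have Hs: "H \<subseteq> {1..n}" by (auto simp: H_def)
  show ?thesis
    apply (rule exI[of _ H])
    apply (intro conjI)
    using Hs part1 part2 unfolding n_def by simp_all
qed


end
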